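(* In the discrete setting of the context, let $\varphi$ be a twice continuously differentiable convex function on $(0,+\infty)$, let $(\rho_K^n)$ be positive, and let the normal face velocities be $u_{K,\sigma}^n={\boldsymbol u}_\sigma^n\cdot{\boldsymbol n}_{K,\sigma}$ for a discrete face velocity field $({\boldsymbol u}_\sigma^n)$. For $K\in\mathcal M$, $0\le n\le N-1$, let $\tilde\rho_K^{n+1/2}\in|\hspace{-0.12em}[\rho_K^n,\rho_K^{n+1}]\hspace{-0.12em}|$ satisfy $\varphi'(\rho_K^{n+1})-\varphi'(\rho_K^n)=\varphi''(\tilde\rho_K^{n+1/2})(\rho_K^{n+1}-\rho_K^n)$, and define \[ |K|\,(R_{01})_K^{n+1}=\varphi''(\tilde\rho_K^{n+1/2})(\rho_K^{n+1}-\rho_K^n)\,\rho_K^n\sum_{\sigma\in\mathcal{E}(K)}|\sigma|\,u_{K,\sigma}^n. \] Let $M>1$ and suppose $\rho_K^n\le M$ and $1/\rho_K^n\le M$ for all $K$ and $0\le n\le N$; let $|\varphi''|_\infty$ be the maximum of $\varphi''$ on $[1/M,M]$. Then for any $p\ge1$, $q\ge1$ with $1/p+1/q=1$, \[ \|R_{01}\|_{L^1}\le C\,C_{\mathcal M}\,M^{(2p-1)/p}\,|\varphi''|_\infty\,\|\rho\|_{t,BV}^{1/p}\,\|{\boldsymbol u}\|_{L^q(0,T;W^{1,q}_{\mathcal M})}\,\delta t^{1/p}, \] where $C>0$ depends only on the maximal number of faces of the mesh cells.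
   Context: Setting: $\Omega\subset\mathbb{R}^d$ bounded, $\mathcal M$ a polytopal mesh with cells $K$ (with a bounded number of faces), faces of $K$ denoted $\mathcal E(K)$, measures $|K|$, $|\sigma|$, $h_K={\rm diam}(K)$, ${\boldsymbol n}_{K,\sigma}$ the unit normal to $\sigma$ outward $K$; uniform time step $\delta t$, $0\le n\le N$. Notation $|\hspace{-0.12em}[a,b]\hspace{-0.12em}|=[\min(a,b),\max(a,b)]$. $\|R\|_{L^1}=\sum_{n=0}^{N-1}\delta t\sum_K|K|\,|R_K^{n+1}|$. $\|z\|_{t,BV}=\sum_n\sum_K|K|\,|z_K^{n+1}-z_K^n|$. For a face velocity field with components $u_{\sigma,i}^n$, \[ \|{\boldsymbol u}\|^q_{L^q(0,T;W^{1,q}_{\mathcal M})}=\sum_{i=1}^d\sum_{n=0}^N\delta t\sum_{K\in\mathcal M}\sum_{(\sigma,\sigma')\in\mathcal{E}(K)^2}|K|\Bigl|\frac{u_{\sigma,i}^n-u_{\sigma',i}^n}{h_K}\Bigr|^q, \] and $C_{\mathcal M}=\max_{K\in\mathcal M,(\sigma,\sigma')\in\mathcal{E}(K)^2}\frac{(|\sigma|+|\sigma'|)h_K}{|K|}$. *)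

theory Defs
  imports "HOL-Analysis.Analysis"
begin

text \<open>Abstract polytopal mesh: cells and faces are indexed by natural numbers.
  cells: set of cells; E K: faces of cell K; volK K = |K|; volS s = |sigma|;
  h K = h_K; nrm K s = unit normal to s outward K; u s n = face velocity u_s^n.\<close>

text \<open>(R01)_K^{n+1}, stored at index n.\<close>
definition R01 ::
  "(nat \<Rightarrow> nat set) \<Rightarrow> (nat \<Rightarrow> real) \<Rightarrow> (nat \<Rightarrow> real) \<Rightarrow> (nat \<Rightarrow> nat \<Rightarrow> 'a::euclidean_space)
   \<Rightarrow> (nat \<Rightarrow> nat \<Rightarrow> 'a) \<Rightarrow> (real \<Rightarrow> real) \<Rightarrow> (nat \<Rightarrow> nat \<Rightarrow> real) \<Rightarrow> (nat \<Rightarrow> nat \<Rightarrow> real)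
   \<Rightarrow> nat \<Rightarrow> nat \<Rightarrow> real" where
  "R01 E volK volS nrm u phi2 rho rt K n =
     phi2 (rt K n) * (rho K (Suc n) - rho K n) * rho K n
       * (\<Sum>s\<in>E K. volS s * (u s n \<bullet> nrm K s)) / volK K"

text \<open>L1 norm; R K n denotes the value R_K^{n+1}.\<close>
definition L1norm :: "nat \<Rightarrow> real \<Rightarrow> nat set \<Rightarrow> (nat \<Rightarrow> real) \<Rightarrow> (nat \<Rightarrow> nat \<Rightarrow> real) \<Rightarrow> real" where
  "L1norm N dt cells volK R = (\<Sum>n<N. dt * (\<Sum>K\<in>cells. volK K * \<bar>R K n\<bar>))"

definition tBV :: "nat \<Rightarrow> nat set \<Rightarrow> (nat \<Rightarrow> real) \<Rightarrow> (nat \<Rightarrow> nat \<Rightarrow> real) \<Rightarrow> real" where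
  "tBV N cells volK z = (\<Sum>n<N. \<Sum>K\<in>cells. volK K * \<bar>z K (Suc n) - z K n\<bar>)"

text \<open>q-th power of the discrete L^q(0,T;W^{1,q}) norm; components via the Basis.\<close>
definition W1q_pow ::
  "real \<Rightarrow> nat \<Rightarrow> real \<Rightarrow> nat set \<Rightarrow> (nat \<Rightarrow> nat set) \<Rightarrow> (nat \<Rightarrow> real) \<Rightarrow> (nat \<Rightarrow> real)
   \<Rightarrow> (nat \<Rightarrow> nat \<Rightarrow> 'a::euclidean_space) \<Rightarrow> real" where
  "W1q_pow q N dt cells E volK h u =
     (\<Sum>i\<in>Basis. \<Sum>n\<in>{0..N}. dt * (\<Sum>K\<in>cells. \<Sum>(s, s')\<in>E K \<times> E K.
        volK K * \<bar>((u s n - u s' n) \<bullet> i) / h K\<bar> powr q))"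

definition CM :: "nat set \<Rightarrow> (nat \<Rightarrow> nat set) \<Rightarrow> (nat \<Rightarrow> real) \<Rightarrow> (nat \<Rightarrow> real) \<Rightarrow> (nat \<Rightarrow> real) \<Rightarrow> real" where
  "CM cells E volK volS h =
     Max {(volS s + volS s') * h K / volK K | K s s'. K \<in> cells \<and> s \<in> E K \<and> s' \<in> E K}"

definition phi2inf :: "real \<Rightarrow> (real \<Rightarrow> real) \<Rightarrow> real" where
  "phi2inf M phi2 = Sup (phi2 ` {1/M..M})"

end

theory Submission
  imports Defs
begin

lemma holder:
  fixes f g :: "'b \<Rightarrow> real"
  assumes I: "finite I" and f0: "\<forall>j\<in>I. f j \<ge> 0" and g0: "\<forall>j\<in>I. g j \<ge> 0"
    and p: "p > 1" and q: "q > 1" and pq: "1/p + 1/q = 1"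
  shows "(\<Sum>j\<in>I. f j * g j) \<le> (\<Sum>j\<in>I. f j powr p) powr (1/p) * (\<Sum>j\<in>I. g j powr q) powr (1/q)"
proof -
  define A where "A = (\<Sum>j\<in>I. f j powr p)"
  define B where "B = (\<Sum>j\<in>I. g j powr q)"
  have A0: "A \<ge> 0" "B \<ge> 0" unfolding A_def B_def by (auto intro: sum_nonneg)
  show ?thesis
  proof (cases "A = 0 \<or> B = 0")
    case True
    have "\<forall>j\<in>I. f j * g j = 0"
    proof
      fix j assume j: "j \<in> I"
      show "f j * g j = 0"
      proof (cases "A = 0")
        case True
        then have "f j powr p = 0" using sum_nonneg_eq_0_iff[OF I, of "\<lambda>j. f j powr p"] j unfolding A_def by auto
        then show ?thesis by simp
      next
        case False
        then have "B = 0" using \<open>A = 0 \<or> B = 0\<close> by simp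
        then have "g j powr q = 0" using sum_nonneg_eq_0_iff[OF I, of "\<lambda>j. g j powr q"] j unfolding B_def by auto
        then show ?thesis by simp
      qed
    qed
    then have "(\<Sum>j\<in>I. f j * g j) = 0" by (intro sum.neutral) auto
    then show ?thesis unfolding A_def[symmetric] B_def[symmetric] by simp
  next
    case False
    then have Ap: "A > 0" and Bp: "B > 0" using A0 by auto
    define a where "a = A powr (1/p)"
    define b where "b = B powr (1/q)"
    have ap: "a > 0" "b > 0" unfolding a_def b_def using Ap Bp by auto
    have apow: "a powr p = A" unfolding a_def using Ap p by (simp add: powr_powr)
    have bpow: "b powr q = B" unfolding b_def using Bp q by (simp add: powr_powr)
    have "\<forall>j\<in>I. (f j / a) * (g j / b) \<le> f j powr p / (p * A) + g j powr q / (q * B)"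
    proof
      fix j assume j: "j \<in> I"
      have "(f j / a) * (g j / b) \<le> (f j / a) powr p / p + (g j / b) powr q / q"
        by (rule Youngs_inequality) (use p q pq f0 g0 j ap in auto)
      also have "(f j / a) powr p = f j powr p / A" using f0 j ap apow by (simp add: powr_divide)
      also have "(g j / b) powr q = g j powr q / B" using g0 j ap bpow by (simp add: powr_divide)
      finally show "(f j / a) * (g j / b) \<le> f j powr p / (p * A) + g j powr q / (q * B)"
        by (simp add: field_simps)
    qed
    then have "(\<Sum>j\<in>I. (f j / a) * (g j / b)) \<le> (\<Sum>j\<in>I. f j powr p / (p * A) + g j powr q / (q * B))"
      by (intro sum_mono) blast
    also have "\<dots> = A / (p * A) + B / (q * B)"
      by (simp add: sum.distrib A_def B_def sum_divide_distrib)
    also have "\<dots> = 1" using Ap Bp pq by simp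
    finally have "(\<Sum>j\<in>I. f j * g j) / (a * b) \<le> 1"
      by (simp add: sum_divide_distrib)
    then have "(\<Sum>j\<in>I. f j * g j) \<le> a * b" using ap by (simp add: divide_le_eq)
    then show ?thesis unfolding a_def b_def A_def B_def .
  qed
qed

lemma sum4:
  assumes "finite A" "finite B" "\<forall>b\<in>B. finite (C b)" "finite D"
  shows "(\<Sum>a\<in>A. \<Sum>b\<in>B. \<Sum>c\<in>C b. \<Sum>d\<in>D. F a b c d)
    = (\<Sum>(a,b,c,d)\<in>{(a,b,c,d). a\<in>A \<and> b\<in>B \<and> c\<in>C b \<and> d\<in>D}. F a b c d)"
proof -
  have e: "{(a,b,c,d). a\<in>A \<and> b\<in>B \<and> c\<in>C b \<and> d\<in>D} = Sigma A (\<lambda>a. Sigma B (\<lambda>b. Sigma (C b) (\<lambda>c. D)))"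
    by auto
  have 1: "(\<Sum>a\<in>A. \<Sum>b\<in>B. \<Sum>c\<in>C b. \<Sum>d\<in>D. F a b c d)
     = (\<Sum>a\<in>A. \<Sum>b\<in>B. \<Sum>(c,d)\<in>C b \<times> D. F a b c d)"
    by (simp add: sum.cartesian_product)
  also have "\<dots> = (\<Sum>a\<in>A. \<Sum>(b,cd)\<in>Sigma B (\<lambda>b. C b \<times> D). F a b (fst cd) (snd cd))"
    using assms by (intro sum.cong refl, subst sum.Sigma) (auto simp: split_def)
  also have "\<dots> = (\<Sum>(a,bcd)\<in>A \<times> Sigma B (\<lambda>b. C b \<times> D). F a (fst bcd) (fst (snd bcd)) (snd (snd bcd)))"
    by (simp add: sum.cartesian_product split_def)
  finally show ?thesis unfolding e by (simp add: split_def)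
qed

lemma powr_le_plus1: "0 \<le> (x::real) \<Longrightarrow> 0 < a \<Longrightarrow> a \<le> 1 \<Longrightarrow> x powr a \<le> x + 1"
proof (cases "x \<le> 1")
  case True
  assume "0 \<le> x" "0 < a" "a \<le> 1"
  then have "x powr a \<le> 1" using True using powr_mono2[of a x 1] by simp
  then show ?thesis using \<open>0 \<le> x\<close> by simp
next
  case False
  assume "0 \<le> x" "0 < a" "a \<le> 1"
  then have "x powr a \<le> x powr 1" using False by (intro powr_mono) auto
  then show ?thesis using False by simp
qed

theorem lemma3p4:
  fixes F :: nat
  shows "\<exists>C>0. \<forall>(cells::nat set) (E::nat \<Rightarrow> nat set) (volK::nat \<Rightarrow> real) (volS::nat \<Rightarrow> real)
      (h::nat \<Rightarrow> real) (nrm::nat \<Rightarrow> nat \<Rightarrow> 'a::euclidean_space) (u::nat \<Rightarrow> nat \<Rightarrow> 'a)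
      (N::nat) (dt::real) (phi::real \<Rightarrow> real) (phi1::real \<Rightarrow> real) (phi2::real \<Rightarrow> real)
      (rho::nat \<Rightarrow> nat \<Rightarrow> real) (rt::nat \<Rightarrow> nat \<Rightarrow> real) (M::real) (p::real) (q::real).
    finite cells \<and> cells \<noteq> {} \<and>
    (\<forall>K\<in>cells. finite (E K) \<and> E K \<noteq> {} \<and> card (E K) \<le> F \<and> volK K > 0 \<and> h K > 0 \<and>
        (\<forall>s\<in>E K. volS s > 0 \<and> norm (nrm K s) = 1) \<and>
        (\<Sum>s\<in>E K. volS s *\<^sub>R nrm K s) = 0) \<and>
    dt > 0 \<and>
    (\<forall>x>0. (phi has_real_derivative phi1 x) (at x)) \<and>
    (\<forall>x>0. (phi1 has_real_derivative phi2 x) (at x)) \<and>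
    continuous_on {0<..} phi2 \<and> convex_on {0<..} phi \<and>
    M > 1 \<and>
    (\<forall>K\<in>cells. \<forall>n\<le>N. 0 < rho K n \<and> rho K n \<le> M \<and> 1 / rho K n \<le> M) \<and>
    (\<forall>K\<in>cells. \<forall>n<N. min (rho K n) (rho K (Suc n)) \<le> rt K n \<and>
        rt K n \<le> max (rho K n) (rho K (Suc n)) \<and>
        phi1 (rho K (Suc n)) - phi1 (rho K n) = phi2 (rt K n) * (rho K (Suc n) - rho K n)) \<and>
    p \<ge> 1 \<and> q \<ge> 1 \<and> 1 / p + 1 / q = 1
    \<longrightarrow>
    L1norm N dt cells volK (R01 E volK volS nrm u phi2 rho rt)
      \<le> C * CM cells E volK volS h * M powr ((2 * p - 1) / p) * phi2inf M phi2
          * tBV N cells volK rho powr (1 / p)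
          * W1q_pow q N dt cells E volK h u powr (1 / q)
          * dt powr (1 / p)"
proof -
  define C where "C = real F * real DIM('a) + 1"
  have Cpos: "C > 0" unfolding C_def by (simp add: add_nonneg_pos)
  show ?thesis
    apply (rule exI[of _ C])
    apply (intro conjI allI impI)
     apply (rule Cpos)
    apply (elim conjE)
    subgoal premises H for cells E volK volS h nrm u N dt phi phi1 phi2 rho rt M p q
    proof -
      have fin: "finite cells" using H by blast
      have cellP: "\<And>K. K \<in> cells \<Longrightarrow> finite (E K) \<and> E K \<noteq> {} \<and> card (E K) \<le> F \<and> volK K > 0 \<and> h K > 0 \<and>
        (\<forall>s\<in>E K. volS s > 0 \<and> norm (nrm K s) = 1) \<and> (\<Sum>s\<in>E K. volS s *\<^sub>R nrm K s) = 0"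
        using H by blast
      have dt: "dt > 0" using H by blast
      have d1: "\<And>x. x > 0 \<Longrightarrow> (phi has_real_derivative phi1 x) (at x)" using H by blast
      have d2: "\<And>x. x > 0 \<Longrightarrow> (phi1 has_real_derivative phi2 x) (at x)" using H by blast
      have cont: "continuous_on {0<..} phi2" using H by blast
      have cvx: "convex_on {0<..} phi" using H by blast
      have M1: "M > 1" using H by blast
      have rhoB: "\<And>K n. K \<in> cells \<Longrightarrow> n \<le> N \<Longrightarrow> 0 < rho K n \<and> rho K n \<le> M \<and> 1 / rho K n \<le> M"
        using H by blast
      have rtP: "\<And>K n. K \<in> cells \<Longrightarrow> n < N \<Longrightarrow> min (rho K n) (rho K (Suc n)) \<le> rt K n \<and>
        rt K n \<le> max (rho K n) (rho K (Suc n)) \<and>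
        phi1 (rho K (Suc n)) - phi1 (rho K n) = phi2 (rt K n) * (rho K (Suc n) - rho K n)"
        using H by blast
      have p1: "p \<ge> 1" and q1: "q \<ge> 1" and pq: "1 / p + 1 / q = 1" using H by blast+
      have p: "p > 1"
      proof -
        have "1/q > 0" using q1 by simp
        then have "1/p < 1" using pq by linarith
        then show ?thesis using p1 by (simp add: divide_less_eq)
      qed
      have q: "q > 1"
      proof -
        have "1/p > 0" using p1 by simp
        then have "1/q < 1" using pq by linarith
        then show ?thesis using q1 by (simp add: divide_less_eq)
      qed
      define P where "P = phi2inf M phi2"
      define CMv where "CMv = CM cells E volK volS h"
      define D where "D = (\<lambda>K n. rho K (Suc n) - rho K n)"
      define s0 where "s0 = (\<lambda>K. SOME s. s \<in> E K)"
      define dd where "dd = (\<lambda>K n s i. ((u s n - u (s0 K) n) \<bullet> i) / h K)"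
      have s0E: "\<And>K. K \<in> cells \<Longrightarrow> s0 K \<in> E K"
      proof -
        fix K assume "K \<in> cells"
        then have "E K \<noteq> {}" using cellP by blast
        then show "s0 K \<in> E K" unfolding s0_def by (simp add: some_in_eq)
      qed
      define SS where "SS = (\<lambda>(K,s,s'). (volS s + volS s') * h K / volK K) ` (SIGMA K:cells. E K \<times> E K)"
      have SSeq: "{(volS s + volS s') * h K / volK K | K s s'. K \<in> cells \<and> s \<in> E K \<and> s' \<in> E K} = SS"
      proof (rule set_eqI, rule iffI)
        fix x assume "x \<in> {(volS s + volS s') * h K / volK K | K s s'. K \<in> cells \<and> s \<in> E K \<and> s' \<in> E K}"
        then obtain K s s' where a: "x = (volS s + volS s') * h K / volK K" "K \<in> cells" "s \<in> E K" "s' \<in> E K"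
          by blast
        show "x \<in> SS" unfolding SS_def by (rule image_eqI[where x="(K,s,s')"]) (use a in auto)
      next
        fix x assume "x \<in> SS"
        then obtain K s s' where a: "K \<in> cells" "s \<in> E K" "s' \<in> E K" "x = (volS s + volS s') * h K / volK K"
          unfolding SS_def by auto
        then show "x \<in> {(volS s + volS s') * h K / volK K | K s s'. K \<in> cells \<and> s \<in> E K \<and> s' \<in> E K}"
          by blast
      qed
      have SSfin: "finite SS" unfolding SS_def using fin cellP by (intro finite_imageI finite_SigmaI) auto
      have CMge: "\<And>K s s'. K \<in> cells \<Longrightarrow> s \<in> E K \<Longrightarrow> s' \<in> E K \<Longrightarrow> (volS s + volS s') * h K / volK K \<le> CMv"
      proof -
        fix K s s' assume a: "K \<in> cells" "s \<in> E K" "s' \<in> E K"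
        have "(volS s + volS s') * h K / volK K \<in> SS" unfolding SS_def using a by force
        then show "(volS s + volS s') * h K / volK K \<le> CMv"
          unfolding CMv_def CM_def SSeq using SSfin by (simp add: Max_ge)
      qed
      have volSle: "\<And>K s. K \<in> cells \<Longrightarrow> s \<in> E K \<Longrightarrow> volS s \<le> CMv * volK K / h K"
      proof -
        fix K s assume a: "K \<in> cells" "s \<in> E K"
        have pos: "volK K > 0" "h K > 0" "volS (s0 K) > 0" using cellP[OF a(1)] s0E[OF a(1)] by auto
        have "(volS s + volS (s0 K)) * h K / volK K \<le> CMv" using CMge[OF a s0E[OF a(1)]] .
        then have "(volS s + volS (s0 K)) * h K \<le> CMv * volK K" using pos by (simp add: divide_le_eq)
        moreover have "volS (s0 K) * h K > 0" using pos by simp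
        ultimately have "volS s * h K \<le> CMv * volK K" by (simp add: distrib_right)
        then show "volS s \<le> CMv * volK K / h K" using pos by (simp add: le_divide_eq)
      qed
      have CMv0: "CMv \<ge> 0"
      proof -
        obtain K where K: "K \<in> cells" using H by blast
        have "volS (s0 K) \<le> CMv * volK K / h K" using volSle[OF K s0E[OF K]] .
        moreover have "volS (s0 K) > 0" "volK K > 0" "h K > 0" using cellP[OF K] s0E[OF K] by auto
        ultimately have "CMv * (volK K / h K) > 0" by simp
        moreover have "volK K / h K > 0" using \<open>volK K > 0\<close> \<open>h K > 0\<close> by simp
        ultimately have a: "0 < CMv * (volK K / h K)" "0 < volK K / h K" by auto
        show ?thesis
        proof (rule ccontr)
          assume "\<not> 0 \<le> CMv"
          then have "CMv * (volK K / h K) \<le> 0" using a(2) by (intro mult_nonpos_nonneg) auto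
          then show False using a by linarith
        qed
      qed
      have intA: "interior {0<..} = ({0<..} :: real set)" by (simp add: interior_open)
      have tang: "\<And>x c. x > 0 \<Longrightarrow> c > 0 \<Longrightarrow> phi x - phi c \<ge> phi1 c * (x - c)"
      proof -
        fix x c :: real assume x: "x > 0" and c: "c > 0"
        show "phi x - phi c \<ge> phi1 c * (x - c)"
          by (rule convex_on_imp_above_tangent[OF cvx])
             (use x c d1[OF c] in \<open>auto simp: intA is_interval_connected is_interval_convex_1 intro: has_field_derivative_at_within\<close>)
      qed
      have phi1mono: "\<And>a b. 0 < a \<Longrightarrow> a \<le> b \<Longrightarrow> phi1 a \<le> phi1 b"
      proof -
        fix a b :: real assume a: "0 < a" "a \<le> b"
        have "phi b - phi a \<ge> phi1 a * (b - a)" using tang[of b a] a by simp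
        moreover have "phi a - phi b \<ge> phi1 b * (a - b)" using tang[of a b] a by simp
        ultimately have "(phi1 b - phi1 a) * (b - a) \<ge> 0" by (simp add: algebra_simps)
        then show "phi1 a \<le> phi1 b" using a by (cases "a = b") (auto simp: zero_le_mult_iff)
      qed
      have bdd: "bdd_above (phi2 ` {1/M..M})"
      proof -
        have "0 < 1/M" using M1 by simp
        then have "{1/M..M} \<subseteq> {0<..}"
          by (intro subsetI, simp only: atLeastAtMost_iff greaterThan_iff) linarith
        then have "continuous_on {1/M..M} phi2" by (intro continuous_on_subset[OF cont])
        then have "compact (phi2 ` {1/M..M})" by (intro compact_continuous_image) auto
        then show ?thesis by (intro bounded_imp_bdd_above compact_imp_bounded)
      qed
      have rhoge: "\<And>K n. K \<in> cells \<Longrightarrow> n \<le> N \<Longrightarrow> 1/M \<le> rho K n"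
      proof -
        fix K n assume "K \<in> cells" "n \<le> N"
        then have r: "0 < rho K n" "1 / rho K n \<le> M" using rhoB by auto
        then have "1 \<le> M * rho K n" by (simp add: divide_le_eq)
        then show "1/M \<le> rho K n" using M1 by (simp add: divide_le_eq mult.commute)
      qed
      have phi2B: "\<And>K n. K \<in> cells \<Longrightarrow> n < N \<Longrightarrow> D K n \<noteq> 0 \<Longrightarrow> 0 \<le> phi2 (rt K n) \<and> phi2 (rt K n) \<le> P"
      proof -
        fix K n assume K: "K \<in> cells" and n: "n < N" and Dn: "D K n \<noteq> 0"
        have r0: "0 < rho K n" "rho K n \<le> M" "1/M \<le> rho K n" using rhoB[OF K] rhoge[OF K] n by auto
        have r1: "0 < rho K (Suc n)" "rho K (Suc n) \<le> M" "1/M \<le> rho K (Suc n)" using rhoB[OF K] rhoge[OF K] n by auto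
        have rt: "min (rho K n) (rho K (Suc n)) \<le> rt K n" "rt K n \<le> max (rho K n) (rho K (Suc n))"
          and eq: "phi1 (rho K (Suc n)) - phi1 (rho K n) = phi2 (rt K n) * D K n"
          using rtP[OF K n] unfolding D_def by auto
        have "phi2 (rt K n) * D K n \<ge> 0 \<and> D K n > 0 \<or> phi2 (rt K n) * D K n \<le> 0 \<and> D K n < 0"
        proof (cases "D K n > 0")
          case True
          then have "phi1 (rho K n) \<le> phi1 (rho K (Suc n))" using phi1mono r0 unfolding D_def by simp
          then show ?thesis using eq True by simp
        next
          case False
          then have "D K n < 0" using Dn by simp
          then have "phi1 (rho K (Suc n)) \<le> phi1 (rho K n)" using phi1mono r1 unfolding D_def by simp
          then show ?thesis using eq \<open>D K n < 0\<close> by simp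
        qed
        then have g0: "0 \<le> phi2 (rt K n)" by (auto simp: zero_le_mult_iff mult_le_0_iff)
        have "rt K n \<in> {1/M..M}" using rt r0 r1 by auto
        then have "phi2 (rt K n) \<le> P" unfolding P_def phi2inf_def by (intro cSup_upper bdd) auto
        then show "0 \<le> phi2 (rt K n) \<and> phi2 (rt K n) \<le> P" using g0 by simp
      qed
      have rhoabs: "\<And>K n. K \<in> cells \<Longrightarrow> n < N \<Longrightarrow> \<bar>D K n\<bar> \<le> M"
      proof -
        fix K n assume K: "K \<in> cells" and n: "n < N"
        have "0 < rho K n" "rho K n \<le> M" "0 < rho K (Suc n)" "rho K (Suc n) \<le> M" using rhoB[OF K] n by auto
        then show "\<bar>D K n\<bar> \<le> M" unfolding D_def by linarith
      qed
      have point: "\<And>K n. K \<in> cells \<Longrightarrow> n < N \<Longrightarrow> P \<ge> 0 \<Longrightarrow>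
          volK K * \<bar>R01 E volK volS nrm u phi2 rho rt K n\<bar>
          \<le> P * CMv * M * \<bar>D K n\<bar> * (\<Sum>s\<in>E K. \<Sum>i\<in>Basis. volK K * \<bar>dd K n s i\<bar>)"
      proof -
        fix K n assume K: "K \<in> cells" and n: "n < N" and P0: "P \<ge> 0"
        have vK: "volK K > 0" and hK: "h K > 0" and finE: "finite (E K)"
          and sK: "\<forall>s\<in>E K. volS s > 0 \<and> norm (nrm K s) = 1"
          and nsum: "(\<Sum>s\<in>E K. volS s *\<^sub>R nrm K s) = 0" using cellP[OF K] by auto
        have r: "0 < rho K n" "rho K n \<le> M" using rhoB[OF K] n by auto
        define S where "S = (\<Sum>s\<in>E K. volS s * (u s n \<bullet> nrm K s))"
        define X where "X = (\<Sum>s\<in>E K. \<Sum>i\<in>Basis. volK K * \<bar>dd K n s i\<bar>)"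
        have X0: "X \<ge> 0" unfolding X_def using vK by (intro sum_nonneg) auto
        have R: "volK K * \<bar>R01 E volK volS nrm u phi2 rho rt K n\<bar> = \<bar>phi2 (rt K n)\<bar> * \<bar>D K n\<bar> * rho K n * \<bar>S\<bar>"
          unfolding R01_def D_def S_def using vK r by (simp add: abs_mult abs_divide)
        have z: "(\<Sum>s\<in>E K. volS s * (u (s0 K) n \<bullet> nrm K s)) = 0"
        proof -
          have "(\<Sum>s\<in>E K. volS s * (u (s0 K) n \<bullet> nrm K s)) = u (s0 K) n \<bullet> (\<Sum>s\<in>E K. volS s *\<^sub>R nrm K s)"
            by (simp add: inner_sum_right)
          then show ?thesis using nsum by simp
        qed
        have Seq: "S = (\<Sum>s\<in>E K. volS s * ((u s n - u (s0 K) n) \<bullet> nrm K s))"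
          unfolding S_def using z by (simp add: inner_diff_left right_diff_distrib sum_subtractf)
        have "\<bar>S\<bar> \<le> (\<Sum>s\<in>E K. \<bar>volS s * ((u s n - u (s0 K) n) \<bullet> nrm K s)\<bar>)"
          unfolding Seq by (rule sum_abs)
        also have "\<dots> \<le> (\<Sum>s\<in>E K. CMv * (\<Sum>i\<in>Basis. volK K * \<bar>dd K n s i\<bar>))"
        proof (rule sum_mono)
          fix s assume s: "s \<in> E K"
          define y where "y = u s n - u (s0 K) n"
          have vs: "volS s > 0" "norm (nrm K s) = 1" using sK s by auto
          have "\<bar>y \<bullet> nrm K s\<bar> \<le> norm y * norm (nrm K s)" by (rule Cauchy_Schwarz_ineq2)
          also have "\<dots> = norm y" using vs by simp
          also have "\<dots> \<le> (\<Sum>i\<in>Basis. \<bar>y \<bullet> i\<bar>)" by (rule norm_le_l1)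
          finally have yb: "\<bar>y \<bullet> nrm K s\<bar> \<le> (\<Sum>i\<in>Basis. \<bar>y \<bullet> i\<bar>)" .
          have "\<bar>volS s * (y \<bullet> nrm K s)\<bar> = volS s * \<bar>y \<bullet> nrm K s\<bar>" using vs by (simp add: abs_mult)
          also have "\<dots> \<le> (CMv * volK K / h K) * (\<Sum>i\<in>Basis. \<bar>y \<bullet> i\<bar>)"
            using yb volSle[OF K s] vs by (intro mult_mono) (auto intro: sum_nonneg)
          also have "\<dots> = CMv * (\<Sum>i\<in>Basis. volK K * \<bar>dd K n s i\<bar>)"
            unfolding dd_def y_def using hK
            by (simp add: sum_distrib_left abs_divide mult_ac)
          finally show "\<bar>volS s * ((u s n - u (s0 K) n) \<bullet> nrm K s)\<bar> \<le> CMv * (\<Sum>i\<in>Basis. volK K * \<bar>dd K n s i\<bar>)"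
            unfolding y_def .
        qed
        also have "\<dots> = CMv * X" unfolding X_def by (simp add: sum_distrib_left)
        finally have Sle: "\<bar>S\<bar> \<le> CMv * X" .
        show "volK K * \<bar>R01 E volK volS nrm u phi2 rho rt K n\<bar>
          \<le> P * CMv * M * \<bar>D K n\<bar> * (\<Sum>s\<in>E K. \<Sum>i\<in>Basis. volK K * \<bar>dd K n s i\<bar>)"
        proof (cases "D K n = 0")
          case True
          then show ?thesis unfolding R by simp
        next
          case False
          then have ph: "\<bar>phi2 (rt K n)\<bar> \<le> P" using phi2B[OF K n] by auto
          have "\<bar>phi2 (rt K n)\<bar> * \<bar>D K n\<bar> * rho K n * \<bar>S\<bar> \<le> P * \<bar>D K n\<bar> * M * (CMv * X)"
            using ph r Sle P0 by (intro mult_mono) auto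
          then show ?thesis unfolding R X_def[symmetric] by (simp add: mult_ac)
        qed
      qed
      have finE: "\<And>K. K \<in> cells \<Longrightarrow> finite (E K)" using cellP by blast
      have vK: "\<And>K. K \<in> cells \<Longrightarrow> volK K > 0" using cellP by blast
      define LHS where "LHS = L1norm N dt cells volK (R01 E volK volS nrm u phi2 rho rt)"
      define tb where "tb = tBV N cells volK rho"
      define W where "W = W1q_pow q N dt cells E volK h u"
      have tb0: "tb \<ge> 0" unfolding tb_def tBV_def using vK by (intro sum_nonneg) (simp add: less_imp_le)
      have vK0: "\<And>K. K \<in> cells \<Longrightarrow> volK K \<ge> 0" using vK by (simp add: less_imp_le)
      have W0: "W \<ge> 0" unfolding W_def W1q_pow_def using vK0 dt
        by (intro sum_nonneg mult_nonneg_nonneg) (auto simp: split_def intro!: mult_nonneg_nonneg)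
      have tbD: "tb = (\<Sum>n<N. \<Sum>K\<in>cells. volK K * \<bar>D K n\<bar>)" unfolding tb_def tBV_def D_def ..
      show ?thesis
      proof (cases "\<exists>K\<in>cells. \<exists>n<N. D K n \<noteq> 0")
        case False
        then have "\<And>K n. K \<in> cells \<Longrightarrow> n < N \<Longrightarrow> R01 E volK volS nrm u phi2 rho rt K n = 0"
          unfolding R01_def D_def by auto
        then have L0: "LHS = 0" unfolding LHS_def L1norm_def by simp
        have "tb = 0" unfolding tbD using False by simp
        then show ?thesis using L0 unfolding LHS_def tb_def by simp
      next
        case True
        then obtain K0 n0 where K0: "K0 \<in> cells" "n0 < N" "D K0 n0 \<noteq> 0" by blast
        have P0: "P \<ge> 0" using phi2B[OF K0] by linarith
        define I :: "(nat \<times> nat \<times> nat \<times> 'a) set" where "I = {(n,K,s,i). n \<in> {..<N} \<and> K \<in> cells \<and> s \<in> E K \<and> i \<in> (Basis::'a set)}"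
        have finI: "finite I"
        proof -
          have "I \<subseteq> {..<N} \<times> cells \<times> (\<Union>K\<in>cells. E K) \<times> Basis" unfolding I_def by auto
          moreover have "finite ({..<N} \<times> cells \<times> (\<Union>K\<in>cells. E K) \<times> (Basis::'a set))"
            using fin finE by auto
          ultimately show ?thesis by (rule finite_subset)
        qed
        have s4: "\<And>G. (\<Sum>n<N. \<Sum>K\<in>cells. \<Sum>s\<in>E K. \<Sum>i\<in>Basis. G n K s i) = (\<Sum>(n,K,s,i)\<in>I. G n K s i)"
          unfolding I_def using fin finE by (intro sum4) auto
        define fI :: "nat \<times> nat \<times> nat \<times> 'a \<Rightarrow> real" where "fI = (\<lambda>(n,K,s,i::'a). (dt * volK K) powr (1/p) * \<bar>D K n\<bar>)"
        define gI :: "nat \<times> nat \<times> nat \<times> 'a \<Rightarrow> real" where "gI = (\<lambda>(n,K,s,i::'a). (dt * volK K) powr (1/q) * \<bar>dd K n s i\<bar>)"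
        have "LHS \<le> (\<Sum>n<N. dt * (\<Sum>K\<in>cells. P * CMv * M * \<bar>D K n\<bar> * (\<Sum>s\<in>E K. \<Sum>i\<in>Basis. volK K * \<bar>dd K n s i\<bar>)))"
          unfolding LHS_def L1norm_def using point P0 dt
          by (intro sum_mono mult_left_mono) auto
        also have "\<dots> = P * CMv * M * (\<Sum>n<N. \<Sum>K\<in>cells. \<Sum>s\<in>E K. \<Sum>i\<in>Basis. dt * volK K * \<bar>D K n\<bar> * \<bar>dd K n s i\<bar>)"
          by (simp add: sum_distrib_left mult_ac)
        also have "\<dots> = P * CMv * M * (\<Sum>j\<in>I. fI j * gI j)"
        proof -
          have "(\<Sum>n<N. \<Sum>K\<in>cells. \<Sum>s\<in>E K. \<Sum>i\<in>Basis. dt * volK K * \<bar>D K n\<bar> * \<bar>dd K n s i\<bar>)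
              = (\<Sum>(n,K,s,i)\<in>I. dt * volK K * \<bar>D K n\<bar> * \<bar>dd K n s i\<bar>)" by (rule s4)
          also have "\<dots> = (\<Sum>j\<in>I. fI j * gI j)"
          proof (rule sum.cong[OF refl])
            fix j :: "nat \<times> nat \<times> nat \<times> 'a" assume "j \<in> I"
            then obtain n K s i where j: "j = (n,K,s,i)" "K \<in> cells" unfolding I_def by auto
            have pos: "dt * volK K > 0" using dt vK[OF j(2)] by simp
            have "(dt * volK K) powr (1/p) * (dt * volK K) powr (1/q) = dt * volK K"
              using pos pq by (simp add: powr_add[symmetric])
            then show "(case j of (n,K,s,i) \<Rightarrow> dt * volK K * \<bar>D K n\<bar> * \<bar>dd K n s i\<bar>) = fI j * gI j"
              unfolding fI_def gI_def j(1) by (simp add: mult_ac)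
          qed
          finally show ?thesis by simp
        qed
        also have "\<dots> \<le> P * CMv * M * ((\<Sum>j\<in>I. fI j powr p) powr (1/p) * (\<Sum>j\<in>I. gI j powr q) powr (1/q))"
          using P0 CMv0 M1
          by (intro mult_left_mono holder finI p q pq) (auto simp: fI_def gI_def split_def)
        finally have step1: "LHS \<le> P * CMv * M * ((\<Sum>j\<in>I. fI j powr p) powr (1/p) * (\<Sum>j\<in>I. gI j powr q) powr (1/q))" .
        have Dpow: "\<And>K n. K \<in> cells \<Longrightarrow> n < N \<Longrightarrow> \<bar>D K n\<bar> powr p \<le> M powr (p - 1) * \<bar>D K n\<bar>"
        proof -
          fix K n assume K: "K \<in> cells" and n: "n < N"
          show "\<bar>D K n\<bar> powr p \<le> M powr (p - 1) * \<bar>D K n\<bar>"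
          proof (cases "D K n = 0")
            case True then show ?thesis using p by simp
          next
            case False
            have "\<bar>D K n\<bar> powr p = \<bar>D K n\<bar> powr ((p - 1) + 1)" by simp
            also have "\<dots> = \<bar>D K n\<bar> powr (p - 1) * \<bar>D K n\<bar>" using False powr_add[of "\<bar>D K n\<bar>" "p - 1" 1] by simp
            also have "\<dots> \<le> M powr (p - 1) * \<bar>D K n\<bar>"
              using rhoabs[OF K n] p by (intro mult_right_mono powr_mono2) auto
            finally show ?thesis .
          qed
        qed
        have Ab: "(\<Sum>j\<in>I. fI j powr p) \<le> real F * real DIM('a) * dt * M powr (p - 1) * tb"
        proof -
          have "(\<Sum>j\<in>I. fI j powr p) = (\<Sum>(n,K,s,i)\<in>I. dt * volK K * \<bar>D K n\<bar> powr p)"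
          proof (rule sum.cong[OF refl])
            fix j :: "nat \<times> nat \<times> nat \<times> 'a" assume "j \<in> I"
            then obtain n K s i where j: "j = (n,K,s,i)" "K \<in> cells" unfolding I_def by auto
            have pos: "dt * volK K > 0" using dt vK[OF j(2)] by simp
            have "((dt * volK K) powr (1/p)) powr p = dt * volK K"
              using pos p by (simp add: powr_powr)
            then show "fI j powr p = (case j of (n,K,s,i) \<Rightarrow> dt * volK K * \<bar>D K n\<bar> powr p)"
              unfolding fI_def j(1) using pos by (simp add: powr_mult)
          qed
          also have "\<dots> \<le> (\<Sum>(n,K,s,i)\<in>I. dt * volK K * (M powr (p - 1) * \<bar>D K n\<bar>))"
          proof (rule sum_mono)
            fix j :: "nat \<times> nat \<times> nat \<times> 'a" assume "j \<in> I"
            then obtain n K s i where j: "j = (n,K,s,i)" "K \<in> cells" "n < N" unfolding I_def by auto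
            have pos: "dt * volK K > 0" using dt vK[OF j(2)] by simp
            show "(case j of (n,K,s,i) \<Rightarrow> dt * volK K * \<bar>D K n\<bar> powr p)
                \<le> (case j of (n,K,s,i) \<Rightarrow> dt * volK K * (M powr (p - 1) * \<bar>D K n\<bar>))"
              unfolding j(1) prod.case using Dpow[OF j(2,3)] pos by (intro mult_left_mono) auto
          qed
          also have "\<dots> = (\<Sum>n<N. \<Sum>K\<in>cells. \<Sum>s\<in>E K. \<Sum>i\<in>(Basis::'a set). dt * volK K * (M powr (p - 1) * \<bar>D K n\<bar>))"
            by (rule s4[symmetric])
          also have "\<dots> = (\<Sum>n<N. \<Sum>K\<in>cells. real (card (E K)) * (real DIM('a) * (dt * volK K * (M powr (p - 1) * \<bar>D K n\<bar>))))"
            by simp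
          also have "\<dots> \<le> (\<Sum>n<N. \<Sum>K\<in>cells. real F * (real DIM('a) * (dt * volK K * (M powr (p - 1) * \<bar>D K n\<bar>))))"
          proof (intro sum_mono mult_right_mono)
            fix n K assume K: "K \<in> cells"
            show "real (card (E K)) \<le> real F" using cellP[OF K] by simp
            show "0 \<le> real DIM('a) * (dt * volK K * (M powr (p - 1) * \<bar>D K n\<bar>))"
              using dt vK0[OF K] by simp
          qed
          also have "\<dots> = real F * real DIM('a) * dt * M powr (p - 1) * tb"
            unfolding tbD by (simp add: sum_distrib_left mult_ac)
          finally show ?thesis .
        qed
        define Q where "Q = (\<lambda>n K s s' i. volK K * \<bar>((u s n - u s' n) \<bullet> i) / h K\<bar> powr q)"
        have Q0: "\<And>n K s s' i. K \<in> cells \<Longrightarrow> Q n K s s' i \<ge> 0" unfolding Q_def using vK0 by simp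
        have Bb: "(\<Sum>j\<in>I. gI j powr q) \<le> W"
        proof -
          have "(\<Sum>j\<in>I. gI j powr q) = (\<Sum>(n,K,s,i)\<in>I. dt * Q n K s (s0 K) i)"
          proof (rule sum.cong[OF refl])
            fix j :: "nat \<times> nat \<times> nat \<times> 'a" assume "j \<in> I"
            then obtain n K s i where j: "j = (n,K,s,i)" "K \<in> cells" unfolding I_def by auto
            have pos: "dt * volK K > 0" using dt vK[OF j(2)] by simp
            have epow: "((dt * volK K) powr (1/q)) powr q = dt * volK K"
              using pos q by (simp add: powr_powr)
            have e0: "gI (n,K,s,i) powr q = ((dt * volK K) powr (1/q)) powr q * \<bar>dd K n s i\<bar> powr q"
              unfolding gI_def prod.case by (simp add: powr_mult)
            have Qe: "Q n K s (s0 K) i = volK K * \<bar>dd K n s i\<bar> powr q" unfolding Q_def dd_def by (rule refl)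
            show "gI j powr q = (case j of (n,K,s,i) \<Rightarrow> dt * Q n K s (s0 K) i)"
              unfolding j(1) prod.case by (simp only: e0 epow Qe mult.assoc)
          qed
          also have "\<dots> = (\<Sum>n<N. \<Sum>K\<in>cells. \<Sum>s\<in>E K. \<Sum>i\<in>(Basis::'a set). dt * Q n K s (s0 K) i)"
            by (rule s4[symmetric])
          also have "\<dots> \<le> (\<Sum>n<N. \<Sum>K\<in>cells. \<Sum>s\<in>E K. \<Sum>i\<in>(Basis::'a set). dt * (\<Sum>s'\<in>E K. Q n K s s' i))"
          proof (intro sum_mono mult_left_mono)
            fix n K s i assume K: "K \<in> cells"
            show "Q n K s (s0 K) i \<le> (\<Sum>s'\<in>E K. Q n K s s' i)"
              using finE[OF K] s0E[OF K] Q0[OF K] by (intro member_le_sum) auto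
          qed (use dt in auto)
          also have "\<dots> = (\<Sum>n<N. dt * (\<Sum>i\<in>(Basis::'a set). \<Sum>K\<in>cells. \<Sum>(s,s')\<in>E K \<times> E K. Q n K s s' i))"
          proof (rule sum.cong[OF refl])
            fix n assume "n \<in> {..<N}"
            have "(\<Sum>K\<in>cells. \<Sum>s\<in>E K. \<Sum>i\<in>(Basis::'a set). dt * (\<Sum>s'\<in>E K. Q n K s s' i))
                = dt * (\<Sum>K\<in>cells. \<Sum>s\<in>E K. \<Sum>i\<in>(Basis::'a set). \<Sum>s'\<in>E K. Q n K s s' i)"
              by (simp add: sum_distrib_left)
            also have "\<dots> = dt * (\<Sum>K\<in>cells. \<Sum>i\<in>(Basis::'a set). \<Sum>(s,s')\<in>E K \<times> E K. Q n K s s' i)"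
            proof -
              have "\<And>K. (\<Sum>s\<in>E K. \<Sum>i\<in>(Basis::'a set). \<Sum>s'\<in>E K. Q n K s s' i)
                  = (\<Sum>i\<in>(Basis::'a set). \<Sum>(s,s')\<in>E K \<times> E K. Q n K s s' i)"
              proof -
                fix K
                have "(\<Sum>s\<in>E K. \<Sum>i\<in>(Basis::'a set). \<Sum>s'\<in>E K. Q n K s s' i)
                    = (\<Sum>i\<in>(Basis::'a set). \<Sum>s\<in>E K. \<Sum>s'\<in>E K. Q n K s s' i)" by (rule sum.swap)
                also have "\<dots> = (\<Sum>i\<in>(Basis::'a set). \<Sum>(s,s')\<in>E K \<times> E K. Q n K s s' i)"
                  by (simp add: sum.cartesian_product)
                finally show "(\<Sum>s\<in>E K. \<Sum>i\<in>(Basis::'a set). \<Sum>s'\<in>E K. Q n K s s' i)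
                  = (\<Sum>i\<in>(Basis::'a set). \<Sum>(s,s')\<in>E K \<times> E K. Q n K s s' i)" .
              qed
              then show ?thesis by simp
            qed
            also have "\<dots> = dt * (\<Sum>i\<in>(Basis::'a set). \<Sum>K\<in>cells. \<Sum>(s,s')\<in>E K \<times> E K. Q n K s s' i)"
              by (subst sum.swap) (rule refl)
            finally show "(\<Sum>K\<in>cells. \<Sum>s\<in>E K. \<Sum>i\<in>(Basis::'a set). dt * (\<Sum>s'\<in>E K. Q n K s s' i))
                = dt * (\<Sum>i\<in>(Basis::'a set). \<Sum>K\<in>cells. \<Sum>(s,s')\<in>E K \<times> E K. Q n K s s' i)" .
          qed
          also have "\<dots> = (\<Sum>i\<in>(Basis::'a set). \<Sum>n<N. dt * (\<Sum>K\<in>cells. \<Sum>(s,s')\<in>E K \<times> E K. Q n K s s' i))"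
            by (simp add: sum_distrib_left sum.swap[of _ "{..<N}"])
          also have "\<dots> \<le> (\<Sum>i\<in>(Basis::'a set). \<Sum>n\<in>{0..N}. dt * (\<Sum>K\<in>cells. \<Sum>(s,s')\<in>E K \<times> E K. Q n K s s' i))"
          proof (rule sum_mono, rule sum_mono2)
            show "{..<N} \<subseteq> {0..N}" by auto
          next
            fix i n
            show "0 \<le> dt * (\<Sum>K\<in>cells. \<Sum>(s,s')\<in>E K \<times> E K. Q n K s s' i)"
              using dt Q0 by (intro mult_nonneg_nonneg sum_nonneg) (auto simp: split_def)
          qed auto
          also have "\<dots> = W" unfolding W_def W1q_pow_def Q_def ..
          finally show ?thesis .
        qed
        define A where "A = (\<Sum>j\<in>I. fI j powr p)"
        define B where "B = (\<Sum>j\<in>I. gI j powr q)"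
        define FD where "FD = real F * real DIM('a)"
        have A0: "A \<ge> 0" "B \<ge> 0" unfolding A_def B_def by (auto intro: sum_nonneg)
        have FD0: "FD \<ge> 0" unfolding FD_def by simp
        have pp: "0 < 1/p" "1/p \<le> 1" using p by auto
        have qq: "0 < 1/q" using q by auto
        have A1: "A powr (1/p) \<le> (FD * dt * M powr (p - 1) * tb) powr (1/p)"
          using Ab A0 pp unfolding A_def FD_def by (intro powr_mono2) auto
        have B1: "B powr (1/q) \<le> W powr (1/q)"
          using Bb A0 qq unfolding B_def by (intro powr_mono2) auto
        have Mpp: "(M powr (p - 1)) powr (1/p) = M powr ((p - 1) / p)"
          using M1 by (simp add: powr_powr)
        have eqA: "(FD * dt * M powr (p - 1) * tb) powr (1/p)
            = FD powr (1/p) * dt powr (1/p) * M powr ((p - 1) / p) * tb powr (1/p)"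
          using FD0 dt tb0 M1 by (simp add: powr_mult Mpp[symmetric])
        have Cb: "FD powr (1/p) \<le> C" unfolding C_def FD_def[symmetric] using powr_le_plus1[OF FD0 pp] .
        have Mpow: "M * M powr ((p - 1) / p) = M powr ((2 * p - 1) / p)"
        proof -
          have "M * M powr ((p - 1) / p) = M powr (1 + (p - 1) / p)" using M1 by (simp add: powr_add)
          also have "1 + (p - 1) / p = (2 * p - 1) / p" using p by (simp add: field_simps)
          finally show ?thesis .
        qed
        have nn: "0 \<le> dt powr (1/p)" "0 \<le> M powr ((p - 1) / p)" "0 \<le> tb powr (1/p)" "0 \<le> W powr (1/q)"
          "0 \<le> A powr (1/p)" "0 \<le> FD powr (1/p)" by auto
        have PCM: "0 \<le> P * CMv * M" using P0 CMv0 M1 by simp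
        have "LHS \<le> P * CMv * M * (A powr (1/p) * B powr (1/q))" using step1 unfolding A_def B_def .
        also have "\<dots> \<le> P * CMv * M * ((FD powr (1/p) * dt powr (1/p) * M powr ((p - 1) / p) * tb powr (1/p)) * W powr (1/q))"
          using A1 B1 nn PCM unfolding eqA[symmetric] by (intro mult_left_mono mult_mono) auto
        also have "\<dots> \<le> P * CMv * M * ((C * dt powr (1/p) * M powr ((p - 1) / p) * tb powr (1/p)) * W powr (1/q))"
          using Cb nn PCM P0 CMv0 M1 by (intro mult_left_mono mult_right_mono mult_nonneg_nonneg) auto
        also have "\<dots> = C * CMv * (M * M powr ((p - 1) / p)) * P * tb powr (1/p) * W powr (1/q) * dt powr (1/p)"
          by (simp add: mult_ac)
        also have "\<dots> = C * CMv * M powr ((2 * p - 1) / p) * P * tb powr (1/p) * W powr (1/q) * dt powr (1/p)"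
          unfolding Mpow ..
        finally show ?thesis unfolding LHS_def CMv_def P_def tb_def W_def .
      qed
    qed
    done
qed

end
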